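(* Let $a,b\in\mathbb C$ and let $x$ be an indeterminate. For integers $0\le p\le k$, set $g_i=P^k_{p+i}(x;a,b)$ for $i=0,\dots,k-p$. Then $$\sum_{i=0}^{k-p}(-1)^{k-p-i}\binom{k-p}{i}g_i=\prod_{i=0}^{p-1}(x+b-i)\prod_{i=0}^{k-p-1}(b-a-p-i).$$
   Context: For integers $0\le i\le k$, $P_i^k(x;a,b):=\prod_{j=0}^{k-i-1}(x+j+a)\prod_{j=0}^{i-1}(x-j+b)$ (empty products equal $1$). *)

theory Defs
  imports "HOL-Computational_Algebra.Polynomial" Complex_Main
begin

definition Ppoly :: "nat \<Rightarrow> nat \<Rightarrow> complex \<Rightarrow> complex \<Rightarrow> complex poly" where
  "Ppoly k i a b =
     (\<Prod>j<k - i. [:of_nat j + a, 1:]) * (\<Prod>j<i. [:b - of_nat j, 1:])"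

end

theory Submission
  imports Defs
begin

lemma poch_const: "pochhammer [:c:] n = [:pochhammer (c::complex) n:]"
  by (induction n) (simp_all add: pochhammer_rec' algebra_simps of_nat_poly)

lemma neg_prod: "(\<Prod>j<i. - f j) = (-1)^i * (\<Prod>j<i. f j :: 'a::comm_ring_1)"
  by (induction i) (simp_all add: mult_ac)

lemma smult_h: "smult ((-1)^m * of_nat c) (q::complex poly) = (-1)^m * of_nat c * q"
proof (induction m)
  case 0 show ?case by (simp add: of_nat_poly)
next
  case (Suc m) then show ?case by simp
qed

lemma negpow: "((-1)::complex poly)^n = [:(-1)^n:]"
  by (induction n) simp_all

lemma L1: "(\<Prod>j<m. [:of_nat j + a, 1:]) = pochhammer [:a::complex,1:] m"
  unfolding pochhammer_prod by (rule prod.cong) (auto simp: of_nat_poly)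

lemma L2: "(\<Prod>j<i. [:b - of_nat (p+j), 1:]) = (-1)^i * pochhammer (- [:b - of_nat p::complex, 1:]) i"
proof -
  have "pochhammer (- [:b - of_nat p::complex, 1:]) i = (\<Prod>j<i. - [:b - of_nat (p+j), 1:])"
    unfolding pochhammer_prod by (rule prod.cong) (auto simp: of_nat_poly)
  also have "\<dots> = (-1)^i * (\<Prod>j<i. [:b - of_nat (p+j), 1:])"
    by (rule neg_prod)
  finally show ?thesis by simp
qed

lemma L3: "(\<Prod>j<p+i. f j) = (\<Prod>j<p. f j) * (\<Prod>j<i. f (p+j::nat))" for f :: "nat \<Rightarrow> 'a::comm_monoid_mult"
proof (induction i)
  case (Suc i) then show ?case by (simp add: mult_ac)
qed simp

theorem proposition4:
  fixes a b :: complex and p k :: nat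
  assumes "p \<le> k"
  shows "(\<Sum>i\<le>k - p. smult ((-1) ^ (k - p - i) * of_nat (k - p choose i)) (Ppoly k (p + i) a b))
       = (\<Prod>i<p. [:b - of_nat i, 1:]) * [:(\<Prod>i<k - p. b - a - of_nat p - of_nat i):]"
proof -
  define n where "n = k - p"
  have k: "k = p + n" using assms n_def by simp
  define Q where "Q = (\<Prod>i<p. [:b - of_nat i, 1:])"
  define u where "u = [:a,1:]"
  define v where "v = [:b - of_nat p::complex, 1:]"
  have trm: "smult ((-1) ^ (n - i) * of_nat (n choose i)) (Ppoly k (p + i) a b)
     = Q * ((-1)^n * (of_nat (n choose i) * pochhammer (-v) i * pochhammer u (n - i)))" if "i \<le> n" for i
  proof -
    have e: "(-1::complex poly)^(n-i) * (-1)^i = (-1)^n"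
      using that by (simp add: power_add[symmetric])
    have "Ppoly k (p + i) a b = pochhammer u (n - i) * (Q * ((-1)^i * pochhammer (-v) i))"
      unfolding Ppoly_def k Q_def u_def v_def
      by (simp add: L1 L3[where p=p and i=i] L2[where i=i and b=b and p=p] del: of_nat_add)
    then have "smult ((-1) ^ (n - i) * of_nat (n choose i)) (Ppoly k (p + i) a b)
      = Q * (((-1::complex poly)^(n-i) * (-1)^i) * (of_nat (n choose i) * pochhammer (-v) i * pochhammer u (n - i)))"
      by (simp only: smult_h) (simp add: mult_ac)
    then show ?thesis by (simp only: e)
  qed
  have "(\<Sum>i\<le>k - p. smult ((-1) ^ (k - p - i) * of_nat (k - p choose i)) (Ppoly k (p + i) a b))
      = (\<Sum>i\<le>n. Q * ((-1)^n * (of_nat (n choose i) * pochhammer (-v) i * pochhammer u (n - i))))"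
    unfolding n_def[symmetric] by (rule sum.cong) (auto simp: trm)
  also have "\<dots> = Q * ((-1)^n * pochhammer (-v + u) n)"
    by (simp only: pochhammer_binomial_sum[of "-v" u n] sum_distrib_left)
  also have "-v + u = [:a - b + of_nat p:]" unfolding u_def v_def by simp
  also have "(-1::complex poly)^n * pochhammer [:a - b + of_nat p:] n
     = [:(\<Prod>i<n. b - a - of_nat p - of_nat i):]"
  proof -
    have "(\<Prod>i<n. b - a - of_nat p - of_nat i) = (\<Prod>i<n. - (a - b + of_nat p + of_nat i))"
      by (rule prod.cong) auto
    also have "\<dots> = (-1)^n * pochhammer (a - b + of_nat p) n"
      by (simp only: neg_prod pochhammer_prod atLeast0LessThan)
    finally show ?thesis by (simp add: poch_const negpow mult.commute)
  qed
  finally show ?thesis unfolding Q_def n_def .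
qed

end
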